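(* Let $T>0$, $u\in\mathbb{R}$ and $w(v)=e^{-(v-u)^2/(2T)}$ on $(0,\infty)$. Let $\{B_n\}_{n\ge0}$ be the orthonormal polynomials on $(0,\infty)$ with respect to $w$ ($\deg B_n=n$, positive leading coefficient, $\int_0^\infty B_mB_n w\,dv=\delta_{mn}$), and let $\alpha_n,\beta_n$ be the coefficients of their three-term recurrence $$\sqrt{\beta_{n+1}}\,B_{n+1}=(v-\alpha_n)B_n-\sqrt{\beta_n}\,B_{n-1},\qquad \beta_0=0,\ B_{-1}=0,$$ i.e. $\alpha_n=\int_0^\infty vB_n^2w\,dv$ and $\sqrt{\beta_{n+1}}=\int_0^\infty vB_nB_{n+1}w\,dv$. Then $\alpha_0=m_1/m_0$ with $m_i=\int_0^\infty v^iw(v)\,dv$, and for all $n\ge0$, $$\beta_{n+1}=2Tn+T-\beta_n+u\alpha_n-\alpha_n^2,\qquad \alpha_{n+1}=\frac{T}{\beta_{n+1}}\sum_{k=0}^n\alpha_k-\alpha_n+u.$$ *)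

theory Defs
  imports "HOL-Analysis.Analysis" "HOL-Computational_Algebra.Polynomial"
begin

definition wgt :: "real \<Rightarrow> real \<Rightarrow> real \<Rightarrow> real" where
  "wgt T u v = exp (- ((v - u)^2) / (2 * T))"

definition moment :: "real \<Rightarrow> real \<Rightarrow> nat \<Rightarrow> real" where
  "moment T u i = (LINT v:{0<..}|lborel. v ^ i * wgt T u v)"

definition orthonormal_family :: "real \<Rightarrow> real \<Rightarrow> (nat \<Rightarrow> real poly) \<Rightarrow> bool" where
  "orthonormal_family T u B \<longleftrightarrow>
     (\<forall>n. degree (B n) = n \<and> lead_coeff (B n) > 0) \<and>
     (\<forall>m n. (LINT v:{0<..}|lborel. poly (B m) v * poly (B n) v * wgt T u v)
              = (if m = n then 1 else 0))"

definition rec_alpha :: "real \<Rightarrow> real \<Rightarrow> (nat \<Rightarrow> real poly) \<Rightarrow> nat \<Rightarrow> real" where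
  "rec_alpha T u B n = (LINT v:{0<..}|lborel. v * (poly (B n) v)^2 * wgt T u v)"

definition rec_beta :: "real \<Rightarrow> real \<Rightarrow> (nat \<Rightarrow> real poly) \<Rightarrow> nat \<Rightarrow> real" where
  "rec_beta T u B n = (if n = 0 then 0 else
     (LINT v:{0<..}|lborel. v * poly (B (n - 1)) v * poly (B n) v * wgt T u v)^2)"

end

theory Submission
  imports Defs "HOL-Probability.Probability" "HOL-Real_Asymp.Real_Asymp"
begin


lemma lim_mono: assumes "(T::real) > 0" shows "((\<lambda>v::real. v^k * exp (- ((v - u)^2) / (2 * T))) \<longlongrightarrow> 0) at_top"
  using assms by real_asymp

lemma integ_lborel:
  assumes "T > 0"
  shows "integrable lborel (\<lambda>v. poly p v * wgt T u v)"
proof -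
  have nd: "wgt T u v = sqrt (2*pi*T) * normal_density u (sqrt T) v" for v
    using assms by (simp add: wgt_def normal_density_def)
  have i1: "integrable lborel (\<lambda>v. (v - u)^k * wgt T u v)" for k
    using integrable_mult_left[OF integrable_normal_moment[of "sqrt T" u k], of "sqrt (2*pi*T)"] assms
    by (simp add: nd mult_ac)
  define q where "q = pcompose p [:u,1:]"
  have "poly p v = (\<Sum>i\<le>degree q. coeff q i * (v - u)^i)" for v
    unfolding q_def poly_altdef[symmetric] by (simp add: poly_pcompose)
  then have eq: "(\<lambda>v. poly p v * wgt T u v) = (\<lambda>v. \<Sum>i\<le>degree q. coeff q i * ((v - u)^i * wgt T u v))"
    by (simp add: sum_distrib_left sum_distrib_right algebra_simps)
  show ?thesis unfolding eq
    by (auto intro!: integrable_sum integrable_mult_right i1)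
qed

definition ipr :: "real \<Rightarrow> real \<Rightarrow> real poly \<Rightarrow> real" where
  "ipr T u p = (LINT v:{0<..}|lborel. poly p v * wgt T u v)"

lemma sint: assumes "T > 0" shows "set_integrable lborel {0<..} (\<lambda>v. poly p v * wgt T u v)"
  unfolding set_integrable_def
  by (rule integrable_mult_indicator[OF _ integ_lborel[OF assms]]) simp

lemma ipr_add: assumes "T > 0" shows "ipr T u (p + q) = ipr T u p + ipr T u q"
  unfolding ipr_def
  using set_integral_add(2)[OF sint[OF assms, of p] sint[OF assms, of q]]
  by (simp add: distrib_right)

lemma ipr_diff: assumes "T > 0" shows "ipr T u (p - q) = ipr T u p - ipr T u q"
  unfolding ipr_def
  using set_integral_diff(2)[OF sint[OF assms, of p] sint[OF assms, of q]]
  by (simp add: left_diff_distrib)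

lemma ipr_smult: "ipr T u (smult c p) = c * ipr T u p"
  unfolding ipr_def
  using set_integral_mult_right
  by (simp add: mult_ac)

lemma ipr_0[simp]: "ipr T u 0 = 0"
  unfolding ipr_def by simp

lemma X_mult: "[:0,1:] * (p::real poly) = pCons 0 p" by simp

lemma coeff_X_pderiv: "coeff ([:0,1:] * pderiv p) j = of_nat j * coeff p j"
  by (cases j) (simp_all add: coeff_pderiv pderiv_pCons)

lemma IBP:
  assumes T: "T > 0"
  shows "T * ipr T u (pderiv ([:0,1:] * p)) = ipr T u ([:0,1:] * [:0,1:] * p) - u * ipr T u ([:0,1:] * p)"
proof -
  define F where "F = (\<lambda>v. poly ([:0,1:] * p) v * wgt T u v)"
  define Q where "Q = pderiv ([:0,1:] * p) - smult (1/T) ([:0,1:] * [:0,1:] * p - smult u ([:0,1:] * p))"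
  define f where "f = (\<lambda>v. poly Q v * wgt T u v)"
  have der: "(F has_vector_derivative f x) (at x)" for x
  proof -
    have "(F has_real_derivative (poly (pderiv ([:0,1:] * p)) x * wgt T u x +
        poly ([:0,1:] * p) x * (wgt T u x * (- (2 * (x - u)) / (2 * T))))) (at x)"
      unfolding F_def wgt_def
      using T by (auto intro!: derivative_eq_intros poly_DERIV simp: power2_eq_square algebra_simps pderiv_pCons) (simp add: field_simps)
    moreover have "poly (pderiv ([:0,1:] * p)) x * wgt T u x +
        poly ([:0,1:] * p) x * (wgt T u x * (- (2 * (x - u)) / (2 * T))) = f x"
      unfolding f_def Q_def using T by (simp add: field_simps pderiv_pCons)
    ultimately show ?thesis by (simp add: has_real_derivative_iff_has_vector_derivative)
  qed
  have cont: "isCont f x" for x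
    unfolding f_def wgt_def using T by (intro continuous_intros) auto
  have lim0: "((F \<circ> real_of_ereal) \<longlongrightarrow> 0) (at_right (0::ereal))"
  proof -
    have "(F \<longlongrightarrow> F 0) (at 0)"
      unfolding F_def wgt_def using T by (intro tendsto_intros) auto
    then have "(F \<longlongrightarrow> 0) (at_right 0)"
      by (auto simp: F_def intro: tendsto_mono[OF at_le])
    then show ?thesis unfolding zero_ereal_def ereal_tendsto_simps1 .
  qed
  have limi: "((F \<circ> real_of_ereal) \<longlongrightarrow> 0) (at_left (\<infinity>::ereal))"
  proof -
    define q where "q = [:0,1:] * p"
    have eq: "F = (\<lambda>v. \<Sum>i\<le>degree q. coeff q i * (v^i * exp (- ((v - u)^2) / (2 * T))))"
      unfolding F_def q_def[symmetric] wgt_def poly_altdef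
      by (simp add: fun_eq_iff sum_distrib_left sum_distrib_right algebra_simps)
    have "(F \<longlongrightarrow> 0) at_top"
      unfolding eq by (intro tendsto_null_sum tendsto_mult_right_zero lim_mono T)
    then show ?thesis unfolding ereal_tendsto_simps1 .
  qed
  have si: "set_integrable lborel (einterval 0 \<infinity>) f"
    using sint[OF T, of Q] by (simp add: f_def einterval_def zero_ereal_def greaterThan_def)
  have "(LBINT x=0..\<infinity>. f x) = 0 - 0"
    by (rule interval_integral_FTC_integrable[OF _ _ _ si lim0 limi])
       (auto intro: der cont)
  moreover have "(LBINT x=0..\<infinity>. f x) = ipr T u Q"
    by (simp add: interval_lebesgue_integral_def einterval_def zero_ereal_def ipr_def f_def greaterThan_def)
  ultimately have "ipr T u Q = 0" by simp
  moreover have "ipr T u Q = ipr T u (pderiv ([:0,1:] * p)) - (1/T) * (ipr T u ([:0,1:] * [:0,1:] * p) - u * ipr T u ([:0,1:] * p))"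
    unfolding Q_def by (simp only: ipr_diff[OF T] ipr_smult)
  ultimately show ?thesis using T
    by (simp add: field_simps)
qed



definition xp :: "real poly" where "xp = [:0,1:]"

lemma coeff_xp_mult: "coeff (xp * p) j = (if j = 0 then 0 else coeff p (j - 1))"
  by (cases j) (simp_all add: xp_def)

lemma coeff_xp_pderiv: "coeff (xp * pderiv p) j = of_nat j * coeff p j"
  unfolding xp_def by (rule coeff_X_pderiv)

lemma pderiv_xp[simp]: "pderiv xp = 1"
  by (simp add: xp_def pderiv_pCons)

lemma poly_xp[simp]: "poly xp v = v" by (simp add: xp_def)

lemma degree_xp_mult: "p \<noteq> 0 \<Longrightarrow> degree (xp * p) = Suc (degree p)"
  by (simp add: xp_def)

lemma lead_cancel:
  fixes R P :: "real poly"
  assumes "R \<noteq> 0" "degree P = degree R" "lead_coeff P \<noteq> 0"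
  shows "\<forall>j\<ge>degree R. coeff (R - smult (lead_coeff R / lead_coeff P) P) j = 0"
proof (intro allI impI)
  fix j assume j: "degree R \<le> j"
  show "coeff (R - smult (lead_coeff R / lead_coeff P) P) j = 0"
  proof (cases "j = degree R")
    case True then show ?thesis using assms by simp
  next
    case False
    then have "degree R < j" using j by simp
    then show ?thesis using assms by (simp add: coeff_eq_0)
  qed
qed

context
  fixes T u :: real and B :: "nat \<Rightarrow> real poly"
  assumes T: "T > 0" and ON: "orthonormal_family T u B"
begin

lemma degB: "degree (B n) = n"
  using ON unfolding orthonormal_family_def by auto

lemma lcB: "lead_coeff (B n) > 0"
  using ON unfolding orthonormal_family_def by metis

lemma Bnz: "B n \<noteq> 0"
  using lcB[of n] by auto

lemma onB: "ipr T u (B m * B n) = (if m = n then 1 else 0)"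
  using ON unfolding orthonormal_family_def ipr_def by (simp add: mult_ac)

lemma ip_add: "ipr T u (p + q) = ipr T u p + ipr T u q" by (rule ipr_add[OF T])
lemma ip_diff: "ipr T u (p - q) = ipr T u p - ipr T u q" by (rule ipr_diff[OF T])

lemma orth_low: "(\<forall>j\<ge>n. coeff q j = 0) \<Longrightarrow> ipr T u (q * B n) = 0"
proof (induction "degree q" arbitrary: q rule: less_induct)
  case less
  show ?case
  proof (cases "q = 0")
    case True then show ?thesis by simp
  next
    case False
    define d where "d = degree q"
    have "coeff q d \<noteq> 0" using False by (simp add: d_def)
    then have dn: "d < n" using less.prems by (meson not_less)
    define c where "c = lead_coeff q / lead_coeff (B d)"
    define q' where "q' = q - smult c (B d)"
    have cq': "\<forall>j\<ge>d. coeff q' j = 0"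
      unfolding q'_def c_def d_def
      by (rule lead_cancel[OF False]) (use degB lcB[of d] in \<open>auto simp: d_def\<close>)
    have i1: "ipr T u (q' * B n) = 0"
    proof (cases "q' = 0")
      case True then show ?thesis by simp
    next
      case False
      have "degree q' < d"
      proof (rule ccontr)
        assume "\<not> degree q' < d"
        then have "coeff q' (degree q') = 0" using cq' by simp
        then show False using False by simp
      qed
      then show ?thesis
        using less.hyps[of q'] less.prems dn cq' by (auto simp: d_def)
    qed
    have "q * B n = q' * B n + smult c (B d * B n)"
      by (simp add: q'_def algebra_simps)
    then have "ipr T u (q * B n) = ipr T u (q' * B n) + c * ipr T u (B d * B n)"
      by (simp add: ip_add ipr_smult)
    then show ?thesis using i1 onB[of d n] dn by simp
  qed
qed

lemma zero_crit:
  assumes "degree R \<le> N" "\<forall>k\<le>N. ipr T u (R * B k) = 0"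
  shows "R = 0"
proof (rule ccontr)
  assume nz: "R \<noteq> 0"
  define d where "d = degree R"
  define c where "c = lead_coeff R / lead_coeff (B d)"
  define R' where "R' = R - smult c (B d)"
  have "\<forall>j\<ge>d. coeff R' j = 0"
    unfolding R'_def c_def d_def
    by (rule lead_cancel[OF nz]) (use degB lcB[of d] in \<open>auto simp: d_def\<close>)
  then have i1: "ipr T u (R' * B d) = 0" by (rule orth_low)
  have "R * B d = R' * B d + smult c (B d * B d)"
    by (simp add: R'_def algebra_simps)
  then have "ipr T u (R * B d) = c" using i1 onB[of d d] by (simp add: ip_add ipr_smult)
  moreover have "c \<noteq> 0" using nz lcB[of d] Bnz[of d] by (simp add: c_def)
  ultimately show False using assms d_def by auto
qed

end


definition aa :: "real \<Rightarrow> real \<Rightarrow> (nat \<Rightarrow> real poly) \<Rightarrow> nat \<Rightarrow> real" where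
  "aa T u B n = (if n = 0 then 0 else ipr T u (xp * B (n - 1) * B n))"

definition al :: "real \<Rightarrow> real \<Rightarrow> (nat \<Rightarrow> real poly) \<Rightarrow> nat \<Rightarrow> real" where
  "al T u B n = ipr T u (xp * B n * B n)"

context
  fixes T u :: real and B :: "nat \<Rightarrow> real poly"
  assumes T: "T > 0" and ON: "orthonormal_family T u B"
begin

lemmas degB' = degB[OF T ON] and lcB' = lcB[OF T ON] and onB' = onB[OF T ON]
  and orth_low' = orth_low[OF T ON] and zero_crit' = zero_crit[OF T ON]
  and ipa = ipr_add[OF T] and ipd = ipr_diff[OF T]

lemma aa_Suc: "aa T u B (Suc n) = ipr T u (xp * B n * B (Suc n))"
  by (simp add: aa_def)

lemma rec: "xp * B n = smult (aa T u B (Suc n)) (B (Suc n)) + smult (al T u B n) (B n)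
     + smult (aa T u B n) (B (n - 1))"
proof -
  define R where "R = xp * B n - (smult (aa T u B (Suc n)) (B (Suc n)) + smult (al T u B n) (B n)
     + smult (aa T u B n) (B (n - 1)))"
  have "degree R \<le> Suc n"
    by (rule degree_le) (auto simp: R_def coeff_xp_mult coeff_eq_0 degB')
  moreover have "\<forall>k\<le>Suc n. ipr T u (R * B k) = 0"
  proof (intro allI impI)
    fix k assume k: "k \<le> Suc n"
    have "R * B k = xp * B n * B k - (smult (aa T u B (Suc n)) (B (Suc n) * B k) + smult (al T u B n) (B n * B k)
     + smult (aa T u B n) (B (n - 1) * B k))"
      by (simp add: R_def algebra_simps)
    then have e: "ipr T u (R * B k) = ipr T u (xp * B n * B k) - (aa T u B (Suc n) * ipr T u (B (Suc n) * B k)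
       + al T u B n * ipr T u (B n * B k) + aa T u B n * ipr T u (B (n - 1) * B k))"
      by (simp only: ipa ipd ipr_smult)
    consider "k = Suc n" | "k = n" | "k < n \<and> k = n - 1" | "k < n \<and> k < n - 1" using k by linarith
    then show "ipr T u (R * B k) = 0"
    proof cases
      case 1 then show ?thesis unfolding e by (simp add: onB' aa_Suc aa_def)
    next
      case 2 then show ?thesis unfolding e by (cases n) (simp_all add: onB' al_def aa_def)
    next
      case 3
      then have n: "n = Suc k" by simp
      have "ipr T u (xp * B n * B k) = aa T u B n"
        by (simp add: n aa_def mult_ac)
      then show ?thesis unfolding e using 3 by (simp add: onB')
    next
      case 4
      have "ipr T u ((xp * B k) * B n) = 0"
        by (rule orth_low') (use 4 in \<open>auto simp: coeff_xp_mult coeff_eq_0 degB'\<close>)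
      then have "ipr T u (xp * B n * B k) = 0" by (simp add: mult_ac)
      then show ?thesis unfolding e using 4 by (simp add: onB')
    qed
  qed
  ultimately have "R = 0" by (rule zero_crit')
  then show ?thesis by (simp add: R_def)
qed

lemma lc_rel: "lead_coeff (B n) = aa T u B (Suc n) * lead_coeff (B (Suc n))"
proof -
  have "coeff (xp * B n) (Suc n) = coeff (smult (aa T u B (Suc n)) (B (Suc n)) + smult (al T u B n) (B n)
     + smult (aa T u B n) (B (n - 1))) (Suc n)"
    using rec by simp
  then show ?thesis by (simp add: coeff_xp_mult coeff_eq_0 degB')
qed

lemma aa_pos: "aa T u B (Suc n) > 0"
  using lc_rel[of n] lcB'[of n] lcB'[of "Suc n"] degB'
  by (metis zero_less_mult_pos2)

lemma tt: "coeff (xp * B n) n = - lead_coeff (B n) * (\<Sum>k<n. al T u B k)"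
proof (induction n)
  case 0 then show ?case by (simp add: coeff_xp_mult)
next
  case (Suc n)
  have "coeff (xp * B n) n = coeff (smult (aa T u B (Suc n)) (B (Suc n)) + smult (al T u B n) (B n)
     + smult (aa T u B n) (B (n - 1))) n"
    using rec by simp
  also have "\<dots> = aa T u B (Suc n) * coeff (B (Suc n)) n + al T u B n * lead_coeff (B n)"
    by (cases n) (simp_all add: coeff_eq_0 degB' degB'[of n] aa_def)
  finally have e: "aa T u B (Suc n) * coeff (B (Suc n)) n =
      - lead_coeff (B n) * (\<Sum>k<Suc n. al T u B k)"
    using Suc.IH by (simp add: algebra_simps)
  have "coeff (xp * B (Suc n)) (Suc n) = coeff (B (Suc n)) n" by (simp add: coeff_xp_mult)
  also have "\<dots> = - lead_coeff (B n) * (\<Sum>k<Suc n. al T u B k) / aa T u B (Suc n)"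
    using e aa_pos[of n] by (simp add: field_simps)
  also have "\<dots> = - lead_coeff (B (Suc n)) * (\<Sum>k<Suc n. al T u B k)"
  proof -
    have L: "coeff (B n) n = aa T u B (Suc n) * lead_coeff (B (Suc n))"
      using lc_rel[of n] degB'[of n] by simp
    show ?thesis using aa_pos[of n] unfolding lc_rel[of n] by (simp add: field_simps)
  qed
  finally show ?case .
qed

lemma D1: "ipr T u (xp * pderiv (B n) * B n) = of_nat n"
proof -
  define Q where "Q = xp * pderiv (B n) - smult (of_nat n) (B n)"
  have "\<forall>j\<ge>n. coeff Q j = 0"
  proof (intro allI impI)
    fix j assume "n \<le> j"
    then show "coeff Q j = 0"
      by (cases "j = n") (auto simp: Q_def coeff_xp_pderiv coeff_eq_0 degB')
  qed
  then have "ipr T u (Q * B n) = 0" by (rule orth_low')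
  moreover have "xp * pderiv (B n) * B n = Q * B n + smult (of_nat n) (B n * B n)"
    by (simp add: Q_def algebra_simps)
  ultimately show ?thesis by (simp add: ipa ipr_smult onB')
qed

lemma D2: "ipr T u (xp * pderiv (B (Suc n)) * B n) = - coeff (B (Suc n)) n / lead_coeff (B n)"
proof -
  define c where "c = coeff (B (Suc n)) n / lead_coeff (B n)"
  define Q where "Q = xp * pderiv (B (Suc n)) - smult (of_nat (Suc n)) (B (Suc n)) + smult c (B n)"
  have "\<forall>j\<ge>n. coeff Q j = 0"
  proof (intro allI impI)
    fix j assume j: "n \<le> j"
    consider "j = n" | "j = Suc n" | "j > Suc n" using j by linarith
    then show "coeff Q j = 0"
    proof cases
      case 1 then show ?thesis using lcB'[of n]
        by (simp add: Q_def coeff_xp_pderiv c_def degB' algebra_simps)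
    next
      case 2 then show ?thesis
        by (simp add: Q_def coeff_xp_pderiv coeff_eq_0 degB')
    next
      case 3 then show ?thesis
        by (simp add: Q_def coeff_xp_pderiv coeff_eq_0 degB')
    qed
  qed
  then have "ipr T u (Q * B n) = 0" by (rule orth_low')
  moreover have "xp * pderiv (B (Suc n)) * B n = Q * B n + smult (of_nat (Suc n)) (B (Suc n) * B n)
      - smult c (B n * B n)"
    by (simp add: Q_def algebra_simps)
  ultimately show ?thesis by (simp add: ipd ipa ipr_smult onB' c_def)
qed

lemma D3: "ipr T u (xp * pderiv (B n) * B (Suc n)) = 0"
  by (rule orth_low') (auto simp: coeff_xp_pderiv coeff_eq_0 degB')

lemma IBP': "T * ipr T u (pderiv (xp * p)) = ipr T u (xp * xp * p) - u * ipr T u (xp * p)"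
  unfolding xp_def by (rule IBP[OF T])

lemma beta_step:
  "aa T u B (Suc n) ^ 2 = 2 * T * real n + T - aa T u B n ^ 2 + u * al T u B n - al T u B n ^ 2"
proof -
  have I: "T * ipr T u (pderiv (xp * (B n * B n))) = ipr T u (xp * xp * (B n * B n)) - u * ipr T u (xp * (B n * B n))"
    by (rule IBP')
  have p1: "pderiv (xp * (B n * B n)) = B n * B n + xp * pderiv (B n) * B n + xp * pderiv (B n) * B n"
    by (simp add: pderiv_mult algebra_simps)
  have l1: "ipr T u (pderiv (xp * (B n * B n))) = 1 + 2 * real n"
    unfolding p1 ipa by (simp add: onB' D1)
  have p2: "xp * xp * (B n * B n) = smult (aa T u B (Suc n)) (xp * B n * B (Suc n)) + smult (al T u B n) (xp * B n * B n)
     + smult (aa T u B n) (xp * B n * B (n - 1))"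
  proof -
    have "xp * xp * (B n * B n) = (xp * B n) * (xp * B n)" by (simp add: mult_ac)
    also have "\<dots> = (xp * B n) * (smult (aa T u B (Suc n)) (B (Suc n)) + smult (al T u B n) (B n)
     + smult (aa T u B n) (B (n - 1)))" using rec by simp
    finally show ?thesis by (simp add: algebra_simps)
  qed
  have a3: "aa T u B n * ipr T u (xp * B n * B (n - 1)) = aa T u B n ^ 2"
  proof (cases n)
    case 0 then show ?thesis by (simp add: aa_def)
  next
    case (Suc m) then show ?thesis by (simp add: aa_def mult_ac power2_eq_square)
  qed
  have l2: "ipr T u (xp * xp * (B n * B n)) = aa T u B (Suc n) ^ 2 + al T u B n ^ 2 + aa T u B n ^ 2"
    unfolding p2 ipa ipr_smult a3 by (simp add: aa_Suc al_def power2_eq_square)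
  have l3: "ipr T u (xp * (B n * B n)) = al T u B n" by (simp add: al_def mult_ac)
  show ?thesis using I l1 l2 l3 by (simp add: algebra_simps)
qed

lemma alpha_step:
  "al T u B (Suc n) = T / (aa T u B (Suc n))^2 * (\<Sum>k\<le>n. al T u B k) - al T u B n + u"
proof -
  let ?a = "aa T u B (Suc n)"
  let ?S = "\<Sum>k\<le>n. al T u B k"
  have I: "T * ipr T u (pderiv (xp * (B n * B (Suc n)))) = ipr T u (xp * xp * (B n * B (Suc n)))
     - u * ipr T u (xp * (B n * B (Suc n)))"
    by (rule IBP')
  have p1: "pderiv (xp * (B n * B (Suc n))) = B n * B (Suc n) + xp * pderiv (B n) * B (Suc n)
     + xp * pderiv (B (Suc n)) * B n"
    by (simp add: pderiv_mult algebra_simps)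
  have cS: "coeff (B (Suc n)) n = - lead_coeff (B (Suc n)) * ?S"
    using tt[of "Suc n"] by (simp add: coeff_xp_mult lessThan_Suc_atMost)
  have l1: "ipr T u (pderiv (xp * (B n * B (Suc n)))) = ?S / ?a"
  proof -
    have "ipr T u (pderiv (xp * (B n * B (Suc n)))) = - coeff (B (Suc n)) n / lead_coeff (B n)"
      unfolding p1 ipa D2 D3 onB' by simp
    also have "\<dots> = ?S / ?a"
      unfolding cS lc_rel[of n] using aa_pos[of n] lcB'[of "Suc n"] by (simp add: degB' field_simps)
    finally show ?thesis .
  qed
  have p2: "xp * xp * (B n * B (Suc n)) = smult ?a (xp * B (Suc n) * B (Suc n))
     + smult (al T u B n) (xp * B (Suc n) * B n) + smult (aa T u B n) (xp * B (Suc n) * B (n - 1))"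
  proof -
    have "xp * xp * (B n * B (Suc n)) = (xp * B (Suc n)) * (xp * B n)" by (simp add: mult_ac)
    also have "\<dots> = (xp * B (Suc n)) * (smult (aa T u B (Suc n)) (B (Suc n)) + smult (al T u B n) (B n)
     + smult (aa T u B n) (B (n - 1)))" using rec by simp
    finally show ?thesis by (simp add: algebra_simps)
  qed
  have a3: "aa T u B n * ipr T u (xp * B (Suc n) * B (n - 1)) = 0"
  proof (cases n)
    case 0 then show ?thesis by (simp add: aa_def)
  next
    case (Suc m)
    have "ipr T u ((xp * B m) * B (Suc n)) = 0"
      by (rule orth_low') (use Suc in \<open>auto simp: coeff_xp_mult coeff_eq_0 degB'\<close>)
    then show ?thesis using Suc by (simp add: mult_ac)
  qed
  have l2: "ipr T u (xp * xp * (B n * B (Suc n))) = ?a * al T u B (Suc n) + al T u B n * ?a"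
    unfolding p2 ipa ipr_smult a3 by (simp add: aa_Suc al_def mult_ac)
  have l3: "ipr T u (xp * (B n * B (Suc n))) = ?a" by (simp add: aa_Suc mult_ac)
  have "T * (?S / ?a) = ?a * al T u B (Suc n) + al T u B n * ?a - u * ?a"
    using I l1 l2 l3 by simp
  then show ?thesis using aa_pos[of n]
    by (simp add: field_simps power2_eq_square)
qed

end


theorem mainTheorem3:
  fixes T u :: real and B :: "nat \<Rightarrow> real poly"
  assumes "T > 0"
    and "orthonormal_family T u B"
  shows "rec_alpha T u B 0 = moment T u 1 / moment T u 0 \<and>
         (\<forall>n. rec_beta T u B (n + 1) =
               2 * T * real n + T - rec_beta T u B n + u * rec_alpha T u B n - (rec_alpha T u B n)^2 \<and>
               rec_alpha T u B (n + 1) =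
               T / rec_beta T u B (n + 1) * (\<Sum>k\<le>n. rec_alpha T u B k) - rec_alpha T u B n + u)"
proof -
  note T = assms(1) and ON = assms(2)
  have RA: "rec_alpha T u B n = al T u B n" for n
    unfolding rec_alpha_def al_def ipr_def by (simp add: power2_eq_square mult_ac)
  have RB: "rec_beta T u B n = (aa T u B n)^2" for n
    unfolding rec_beta_def aa_def ipr_def by (simp add: mult_ac)
  have A0: "rec_alpha T u B 0 = moment T u 1 / moment T u 0"
  proof -
    define k where "k = coeff (B 0) 0"
    have B0: "B 0 = [:k:]" unfolding k_def using degree_0_id[OF degB[OF T ON, of 0]] by simp
    have m0: "moment T u 0 = ipr T u 1" by (simp add: moment_def ipr_def)
    have m1: "moment T u 1 = ipr T u xp" by (simp add: moment_def ipr_def)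
    have "ipr T u (B 0 * B 0) = 1" using onB[OF T ON, of 0 0] by simp
    moreover have "B 0 * B 0 = smult (k^2) 1" by (simp add: B0 power2_eq_square)
    ultimately have e0: "k^2 * moment T u 0 = 1" by (metis m0 ipr_smult)
    have "xp * B 0 * B 0 = smult (k^2) xp" by (simp add: B0 power2_eq_square)
    then have "rec_alpha T u B 0 = k^2 * ipr T u xp" by (simp add: RA al_def ipr_smult)
    then have "rec_alpha T u B 0 = k^2 * moment T u 1" by (simp only: m1)
    moreover have m0nz: "moment T u 0 \<noteq> 0" using e0 by auto
    moreover have "k^2 = 1 / moment T u 0" using e0 m0nz by (simp add: field_simps)
    ultimately show ?thesis by simp
  qed
  show ?thesis
    using A0 beta_step[OF T ON] alpha_step[OF T ON] by (simp add: RA RB)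
qed

end
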